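(* Let $n$ be an even integer and $m$ an integer with $\frac n4<m<\frac n3$. Let $x\in\{0,1\}^n$ and let $\ell=|\{j\in[1..2m+2]\mid x_j=1\}|$ be the number of ones among the first $2m+2$ positions of $x$, and suppose $1\le\ell\le 2m+1$. Then for any unary unbiased variation operator $V$, $\Pr[\mathrm{LO}(V(x))\ge 2m+2]\le\frac2n$.
   Context: $\mathrm{LO}(x)=\sum_{r=1}^n\prod_{s=1}^r x_s$ is the number of leading ones of $x\in\{0,1\}^n$. A unary unbiased variation operator $V$ assigns to each $x\in\{0,1\}^n$ a probability distribution $V(x)$ on $\{0,1\}^n$ such that for all $x,y,z$, $\Pr[y=V(x)]=\Pr[y\oplus z=V(x\oplus z)]$, and for all permutations $\sigma$ of $[1..n]$, $\Pr[y=V(x)]=\Pr[\sigma(y)=V(\sigma(x))]$, where $\sigma(x)=(x_{\sigma(1)},\dots,x_{\sigma(n)})$. *)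

theory Defs
  imports "HOL-Probability.Probability"
begin

text \<open>Bit strings x in {0,1}^n are lists of booleans of length n; position i (1-based)
  of the paper is list index i-1.\<close>

definition LO :: "bool list \<Rightarrow> nat" where
  "LO x = (\<Sum>r = 1..length x. \<Prod>s = 1..r. (if x ! (s - 1) then 1 else 0))"

definition bxor :: "bool list \<Rightarrow> bool list \<Rightarrow> bool list" where
  "bxor x z = map2 (\<lambda>a b. a \<noteq> b) x z"

definition bperm :: "(nat \<Rightarrow> nat) \<Rightarrow> bool list \<Rightarrow> bool list" where
  "bperm \<sigma> x = map (\<lambda>i. x ! \<sigma> i) [0..<length x]"

definition unary_unbiased :: "nat \<Rightarrow> (bool list \<Rightarrow> bool list pmf) \<Rightarrow> bool" where
  "unary_unbiased n V \<longleftrightarrow>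
     (\<forall>x. length x = n \<longrightarrow> set_pmf (V x) \<subseteq> {y. length y = n}) \<and>
     (\<forall>x y z. length x = n \<longrightarrow> length y = n \<longrightarrow> length z = n \<longrightarrow>
        pmf (V x) y = pmf (V (bxor x z)) (bxor y z)) \<and>
     (\<forall>x y \<sigma>. length x = n \<longrightarrow> length y = n \<longrightarrow> \<sigma> permutes {0..<n} \<longrightarrow>
        pmf (V x) y = pmf (V (bperm \<sigma> x)) (bperm \<sigma> y))"

end

theory Submission
  imports Defs "HOL-Combinatorics.Permutations"
begin

lemma bxor_len[simp]: "length (bxor a b) = min (length a) (length b)"
  by (simp add: bxor_def)

lemma bxor_nth[simp]: "i < length a \<Longrightarrow> i < length b \<Longrightarrow> bxor a b ! i = (a ! i \<noteq> b ! i)"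
  by (simp add: bxor_def)

lemma bperm_len[simp]: "length (bperm s a) = length a"
  by (simp add: bperm_def)

lemma bperm_nth[simp]: "i < length a \<Longrightarrow> bperm s a ! i = a ! s i"
  by (simp add: bperm_def)

lemma bxor_cancel: "length u = length x \<Longrightarrow> bxor u (bxor u x) = x"
  by (rule nth_equalityI) auto

lemma h_pmf:
  assumes "unary_unbiased n V" "length x = n" "length y = n" "s permutes {0..<n}"
  shows "pmf (V x) (bxor (bperm s y) (bxor (bperm s x) x)) = pmf (V x) y"
proof -
  let ?e = "bxor (bperm s x) x"
  have 1: "pmf (V x) y = pmf (V (bperm s x)) (bperm s y)"
    using assms unfolding unary_unbiased_def by blast
  have 2: "pmf (V (bperm s x)) (bperm s y) = pmf (V (bxor (bperm s x) ?e)) (bxor (bperm s y) ?e)"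
    using assms unfolding unary_unbiased_def by (metis bperm_len bxor_len min.idem)
  have 3: "bxor (bperm s x) ?e = x" by (rule bxor_cancel) simp
  show ?thesis using 1 2 3 by simp
qed

lemma LO_le:
  assumes "i < length y" "\<not> y ! i"
  shows "LO y \<le> i"
proof -
  let ?f = "\<lambda>r. \<Prod>s = 1..r. (if y ! (s - 1) then 1 else 0::nat)"
  have le1: "?f r \<le> 1" for r by (rule prod_le_1) auto
  have z: "?f r = 0" if "r \<ge> i + 1" for r
    using that assms by (intro prod_zero bexI[of _ "i+1"]) auto
  have "LO y = sum ?f {1..i + (length y - i)}" unfolding LO_def using assms by simp
  also have "\<dots> = sum ?f {1..i} + sum ?f {i+1..i + (length y - i)}"
    by (rule sum.ub_add_nat) simp
  also have "sum ?f {i+1..i + (length y - i)} = 0" using z by simp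
  also have "sum ?f {1..i} \<le> sum (\<lambda>_. 1) {1..i}" by (rule sum_mono) (rule le1)
  finally show ?thesis by simp
qed


theorem lemma14:
  fixes n m :: nat and x :: "bool list" and V :: "bool list \<Rightarrow> bool list pmf"
  assumes "even n"
    and "real n / 4 < real m" and "real m < real n / 3"
    and "length x = n"
    and "1 \<le> card {j \<in> {1..2*m+2}. x ! (j - 1)}"
    and "card {j \<in> {1..2*m+2}. x ! (j - 1)} \<le> 2*m+1"
    and "unary_unbiased n V"
  shows "measure_pmf.prob (V x) {y. LO y \<ge> 2*m+2} \<le> 2 / real n"
proof -
  define k where "k = 2*m+2"
  have n4: "n < 4*m" using assms(2) by linarith
  have n3: "3*m < n" using assms(3) by linarith
  have kn: "k \<le> n" unfolding k_def using n4 n3 by linarith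
  define P1 where "P1 = {i. i < k \<and> x ! i}"
  define P0 where "P0 = {i. i < k \<and> \<not> x ! i}"
  have fin1: "finite P1" and fin0: "finite P0" unfolding P1_def P0_def by auto
  have P1eq: "P1 = (\<lambda>j. j - 1) ` {j \<in> {1..2*m+2}. x ! (j - 1)}"
  proof (rule set_eqI, rule iffI)
    fix i assume "i \<in> P1" thus "i \<in> (\<lambda>j. j - 1) ` {j \<in> {1..2*m+2}. x ! (j - 1)}"
      unfolding P1_def k_def by (intro image_eqI[of _ _ "i+1"]) auto
  qed (auto simp: P1_def k_def)
  have cP1: "card P1 = card {j \<in> {1..2*m+2}. x ! (j - 1)}"
    unfolding P1eq by (rule card_image) (auto simp: inj_on_def)
  have "P1 \<union> P0 = {..<k}" "P1 \<inter> P0 = {}" unfolding P1_def P0_def by auto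
  hence cU: "card P1 + card P0 = k" using fin1 fin0 by (metis card_Un_disjoint card_lessThan)
  define a where "a = card P1"
  define b where "b = card P0"
  have a1: "a \<ge> 1" using assms(5) cP1 a_def by simp
  have b1: "b \<ge> 1" using assms(6) cP1 cU a_def b_def k_def by simp
  have abk: "a + b = k" using cU a_def b_def by simp
  have "(a - 1) * (b - 1) \<ge> 0" by simp
  have ab: "a * b \<ge> k - 1"
  proof -
    obtain a' b' where "a = Suc a'" "b = Suc b'" using a1 b1 by (metis Suc_le_D One_nat_def)
    thus ?thesis using abk by simp
  qed
  have "n \<le> 2 * (a * b)" using ab n4 unfolding k_def by simp
  hence abn: "real (a * b) \<ge> real n / 2" by linarith
  define T where "T = {y. length y = n \<and> (\<forall>i<k. y ! i)}"
  have finT: "finite T" unfolding T_def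
    by (rule finite_subset[OF _ finite_lists_length_eq[of "UNIV::bool set" n]]) auto
  define h where "h = (\<lambda>pq y. bxor (bperm (Transposition.transpose (fst pq) (snd pq)) y)
        (bxor (bperm (Transposition.transpose (fst pq) (snd pq)) x) x))"
  define Tp where "Tp = (\<lambda>pq. h pq ` T)"
  have hnth: "h pq y ! i = (y ! (Transposition.transpose (fst pq) (snd pq) i) \<noteq>
       (x ! (Transposition.transpose (fst pq) (snd pq) i) \<noteq> x ! i))"
    if "length y = n" "i < n" for pq y i
    using that assms(4) unfolding h_def by simp
  have hlen: "length (h pq y) = n" if "length y = n" for pq y
    using that assms(4) unfolding h_def by simp
  have perm: "Transposition.transpose p q permutes {0..<n}" if "(p,q) \<in> P1 \<times> P0" for p q
    using that kn unfolding P1_def P0_def by (intro permutes_swap_id) auto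
  have Tp_char: "w ! i = (i \<noteq> p \<and> i \<noteq> q)"
    if tc: "(p,q) \<in> P1 \<times> P0" "w \<in> Tp (p,q)" "i < k" for p q w i
  proof -
    obtain y where y: "y \<in> T" "w = h (p,q) y" using tc(2) unfolding Tp_def by auto
    have pq: "p < k" "q < k" "x ! p" "\<not> x ! q" using tc(1) unfolding P1_def P0_def by auto
    have "Transposition.transpose p q i < k" using pq tc(3) by (auto simp: Transposition.transpose_def)
    hence "y ! (Transposition.transpose p q i)" using y(1) unfolding T_def by auto
    moreover have "w ! i = (y ! (Transposition.transpose p q i) \<noteq> (x ! (Transposition.transpose p q i) \<noteq> x ! i))"
      using y hnth[of y i "(p,q)"] tc(3) kn unfolding T_def by auto
    ultimately show ?thesis using pq by (auto simp: Transposition.transpose_def)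
  qed
  have inj: "inj_on (h pq) T" if "pq \<in> P1 \<times> P0" for pq
  proof (rule inj_onI)
    fix y1 y2 assume y: "y1 \<in> T" "y2 \<in> T" "h pq y1 = h pq y2"
    let ?s = "Transposition.transpose (fst pq) (snd pq)"
    have ps: "?s permutes {0..<n}" using perm[of "fst pq" "snd pq"] that by simp
    have "y1 ! j = y2 ! j" if "j < n" for j
    proof -
      have "?s j < n" using permutes_in_image[OF ps, of j] that by simp
      have "h pq y1 ! (?s j) = h pq y2 ! (?s j)" using y by simp
      hence "y1 ! (?s (?s j)) = y2 ! (?s (?s j))"
        using hnth[of y1 "?s j" pq] hnth[of y2 "?s j" pq] y(1,2) \<open>?s j < n\<close> unfolding T_def by auto
      thus ?thesis by simp
    qed
    thus "y1 = y2" using y(1,2) unfolding T_def by (auto intro: nth_equalityI)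
  qed
  have sumTp: "sum (pmf (V x)) (Tp pq) = sum (pmf (V x)) T" if "pq \<in> P1 \<times> P0" for pq
  proof -
    have "sum (pmf (V x)) (Tp pq) = sum (pmf (V x) \<circ> h pq) T"
      unfolding Tp_def by (rule sum.reindex[OF inj[OF that]])
    also have "\<dots> = sum (pmf (V x)) T"
    proof (rule sum.cong[OF refl])
      fix y assume "y \<in> T"
      thus "(pmf (V x) \<circ> h pq) y = pmf (V x) y"
        unfolding h_def o_def using h_pmf[OF assms(7) assms(4), of y] perm[of "fst pq" "snd pq"] that
        unfolding T_def by (cases pq) auto
    qed
    finally show ?thesis .
  qed
  have disj: "Tp pq \<inter> Tp pq' = {}" if dj: "pq \<in> P1 \<times> P0" "pq' \<in> P1 \<times> P0" "pq \<noteq> pq'" for pq pq'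
  proof (rule ccontr)
    assume "Tp pq \<inter> Tp pq' \<noteq> {}"
    then obtain w where w: "w \<in> Tp pq" "w \<in> Tp pq'" by auto
    obtain p q p' q' where e: "pq = (p,q)" "pq' = (p',q')" by (cases pq, cases pq') auto
    have pk: "p < k" "q < k" "p' < k" "q' < k" "x ! p" "\<not> x ! q" "x ! p'" "\<not> x ! q'"
      using dj e unfolding P1_def P0_def by auto
    have c1: "w ! i = (i \<noteq> p \<and> i \<noteq> q)" if "i < k" for i
      using Tp_char[of p q w i] that w e \<open>pq \<in> _\<close> by auto
    have c2: "w ! i = (i \<noteq> p' \<and> i \<noteq> q')" if "i < k" for i
      using Tp_char[of p' q' w i] that w e \<open>pq' \<in> _\<close> by auto
    have "p \<noteq> q'" "q \<noteq> p'" using pk by auto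
    have "p = p'" using c1[of p] c2[of p] pk \<open>p \<noteq> q'\<close> by auto
    moreover have "q = q'" using c1[of q] c2[of q] pk \<open>q \<noteq> p'\<close> by auto
    ultimately show False using dj(3) e by simp
  qed
  have finTp: "finite (Tp pq)" for pq unfolding Tp_def using finT by simp
  have "sum (pmf (V x)) (\<Union>pq\<in>P1 \<times> P0. Tp pq) = (\<Sum>pq\<in>P1 \<times> P0. sum (pmf (V x)) (Tp pq))"
    by (rule sum.UNION_disjoint) (use fin1 fin0 finTp disj in auto)
  also have "\<dots> = real (a * b) * sum (pmf (V x)) T"
    using sumTp by (simp add: a_def b_def card_cartesian_product)
  finally have eq: "sum (pmf (V x)) (\<Union>pq\<in>P1 \<times> P0. Tp pq) = real (a * b) * sum (pmf (V x)) T" .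
  have "sum (pmf (V x)) (\<Union>pq\<in>P1 \<times> P0. Tp pq) \<le> 1"
    by (metis measure_measure_pmf_finite measure_pmf.prob_le_1 finite_UN_I finite_cartesian_product fin1 fin0 finTp)
  hence sT: "real (a * b) * sum (pmf (V x)) T \<le> 1" using eq by simp
  have ST: "measure_pmf.prob (V x) {y. LO y \<ge> 2*m+2} \<le> sum (pmf (V x)) T"
  proof -
    have sub: "{y. LO y \<ge> 2*m+2} \<inter> set_pmf (V x) \<subseteq> T"
    proof
      fix y assume y: "y \<in> {y. LO y \<ge> 2*m+2} \<inter> set_pmf (V x)"
      have ln: "length y = n" using y assms(7) assms(4) unfolding unary_unbiased_def by blast
      have "y ! i" if "i < k" for i
      proof (rule ccontr)
        assume "\<not> y ! i"
        hence "LO y \<le> i" using LO_le[of i y] ln that kn by simp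
        thus False using y that unfolding k_def by simp
      qed
      thus "y \<in> T" using ln unfolding T_def by simp
    qed
    have "measure_pmf.prob (V x) {y. LO y \<ge> 2*m+2} = measure_pmf.prob (V x) ({y. LO y \<ge> 2*m+2} \<inter> set_pmf (V x))"
      by (simp add: measure_Int_set_pmf)
    also have "\<dots> \<le> measure_pmf.prob (V x) T"
      by (rule measure_pmf.finite_measure_mono[OF sub]) simp
    also have "\<dots> = sum (pmf (V x)) T" by (rule measure_measure_pmf_finite[OF finT])
    finally show ?thesis .
  qed
  have npos: "real n > 0" using n3 by simp
  have s0: "sum (pmf (V x)) T \<ge> 0" by (simp add: sum_nonneg)
  have "real n / 2 * sum (pmf (V x)) T \<le> 1"
    using sT abn s0 by (meson mult_right_mono order_trans)
  hence "sum (pmf (V x)) T \<le> 2 / real n" using npos by (simp add: field_simps)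
  thus ?thesis using ST by simp
qed

end
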